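(* Let $\mathfrak{S}=(\mathcal{X},\mathsf{S},\gamma,(\Lambda_{a})_{a\in\mathcal{A}})$ be a spectral decomposition system for the Euclidean space $\mathfrak{H}$, let $\varphi\colon\mathcal{X}\to\left]-\infty,+\infty\right]$ be proper and $\mathsf{S}$-invariant, and let $Y\in\mathfrak{H}$. Set $\mathcal{M}=\operatorname{Argmin}(\varphi\circ\gamma-\langle\cdot,Y\rangle)$ and $M=\operatorname{Argmin}(\varphi-\langle\cdot,\gamma(Y)\rangle)$. Then: (i) $\inf_{X\in\mathfrak{H}}\big(\varphi(\gamma(X))-\langle X,Y\rangle\big)=\inf_{x\in\mathcal{X}}\big(\varphi(x)-\langle x,\gamma(Y)\rangle\big)$; (ii) for every $X\in\mathfrak{H}$: $X\in\mathcal{M}$ if and only if $\gamma(X)\in M$ and there exists $a\in\mathcal{A}$ such that $X=\Lambda_a\gamma(X)$ and $Y=\Lambda_a\gamma(Y)$; (iii) for every $x\in\mathcal{X}$ and every $b\in\mathcal{A}_Y$: $\Lambda_bx\in\mathcal{M}$ if and only if $x\in M$; (iv) $\mathcal{M}=\{\Lambda_bx : x\in M,\ b\in\mathcal{A}_Y\}$; (v) $\mathcal{M}$ is convex if and only if $M$ is convex; (vi) $\mathcal{M}$ is a singleton if and only if $M$ is a singleton.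
   Context: A Euclidean space is a finite-dimensional real inner product space; inner products are written $\langle\cdot,\cdot\rangle$ and norms $\|\cdot\|$. Let $\mathfrak{H}$ and $\mathcal{X}$ be Euclidean spaces, let $\mathsf{S}$ be a group acting on $\mathcal{X}$ by linear isometries, let $\gamma\colon\mathfrak{H}\to\mathcal{X}$, and let $(\Lambda_a)_{a\in\mathcal{A}}$ be a family of linear operators from $\mathcal{X}$ to $\mathfrak{H}$. The orbit of $x$ is $\mathsf{S}\cdot x=\{s\cdot x: s\in\mathsf{S}\}$; a map $f$ on $\mathcal{X}$ is $\mathsf{S}$-invariant if $f(s\cdot x)=f(x)$ for all $s,x$. The tuple is a spectral decomposition system for $\mathfrak{H}$ if: [A] every $\Lambda_a$ is an isometry; [B] there exists an $\mathsf{S}$-invariant $\tau\colon\mathcal{X}\to\mathcal{X}$ with $\tau(x)\in\mathsf{S}\cdot x$ for all $x$ and $\gamma\circ\Lambda_a=\tau$ for all $a$; [C] for every $X\in\mathfrak{H}$ there is $a$ with $X=\Lambda_a\gamma(X)$; [D] $\langle X,Y\rangle\leq\langle\gamma(X),\gamma(Y)\rangle$ for all $X,Y\in\mathfrak{H}$. For $X\in\mathfrak{H}$, $\mathcal{A}_X=\{a\in\mathcal{A}: X=\Lambda_a\gamma(X)\}$. A function is proper if it never takes $-\infty$ and is finite somewhere. For $g\colon\mathcal{H}\to\left]-\infty,+\infty\right]$, $\operatorname{Argmin}g=\{x: g(x)=\inf g(\mathcal{H})\}$ if $\inf g(\mathcal{H})<+\infty$, and $\operatorname{Argmin}g=\varnothing$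 otherwise. *)

theory Defs
  imports "HOL-Analysis.Analysis"
begin

text \<open>The group S acting on X by linear isometries is represented by the set of maps
  x \<mapsto> s \<cdot> x it induces; this set is a group of linear isometries under composition.\<close>
definition isometry_group :: "('x::euclidean_space \<Rightarrow> 'x) set \<Rightarrow> bool" where
  "isometry_group S \<longleftrightarrow>
     id \<in> S \<and>
     (\<forall>s\<in>S. \<forall>t\<in>S. s \<circ> t \<in> S) \<and>
     (\<forall>s\<in>S. \<exists>t\<in>S. s \<circ> t = id \<and> t \<circ> s = id) \<and>
     (\<forall>s\<in>S. linear s \<and> (\<forall>x. norm (s x) = norm x))"

definition orbit :: "('x \<Rightarrow> 'x) set \<Rightarrow> 'x \<Rightarrow> 'x set" where
  "orbit S x = {s x | s. s \<in> S}"

definition S_invariant :: "('x \<Rightarrow> 'x) set \<Rightarrow> ('x \<Rightarrow> 'b) \<Rightarrow> bool" where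
  "S_invariant S f \<longleftrightarrow> (\<forall>s\<in>S. \<forall>x. f (s x) = f x)"

definition spectral_decomposition_system ::
  "('x::euclidean_space \<Rightarrow> 'x) set \<Rightarrow> ('h::euclidean_space \<Rightarrow> 'x) \<Rightarrow> ('a \<Rightarrow> 'x \<Rightarrow> 'h) \<Rightarrow> bool" where
  "spectral_decomposition_system S \<gamma> \<Lambda> \<longleftrightarrow>
     isometry_group S \<and>
     (\<forall>a. linear (\<Lambda> a) \<and> (\<forall>x. norm (\<Lambda> a x) = norm x)) \<and>
     (\<exists>\<tau>. S_invariant S \<tau> \<and> (\<forall>x. \<tau> x \<in> orbit S x) \<and> (\<forall>a. \<gamma> \<circ> \<Lambda> a = \<tau>)) \<and>
     (\<forall>X. \<exists>a. X = \<Lambda> a (\<gamma> X)) \<and>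
     (\<forall>X Y. X \<bullet> Y \<le> \<gamma> X \<bullet> \<gamma> Y)"

definition A_of :: "('h \<Rightarrow> 'x) \<Rightarrow> ('a \<Rightarrow> 'x \<Rightarrow> 'h) \<Rightarrow> 'h \<Rightarrow> 'a set" where
  "A_of \<gamma> \<Lambda> X = {a. X = \<Lambda> a (\<gamma> X)}"

text \<open>Functions into ]-\<infinity>,+\<infinity>] are modelled as ereal-valued functions never equal to -\<infinity>.\<close>
definition proper :: "('x \<Rightarrow> ereal) \<Rightarrow> bool" where
  "proper f \<longleftrightarrow> (\<forall>x. f x \<noteq> -\<infinity>) \<and> (\<exists>x. f x \<noteq> \<infinity>)"

definition Argmin :: "('x \<Rightarrow> ereal) \<Rightarrow> 'x set" where
  "Argmin g = (if (INF x. g x) < \<infinity> then {x. g x = (INF x. g x)} else {})"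

end

theory Submission
  imports Defs
begin


lemma face_lemma:
  fixes K M :: "'y::euclidean_space set"
  assumes "compact K" "convex M" "\<forall>k\<in>K. v \<bullet> k \<le> c" "{k\<in>K. v \<bullet> k = c} \<subseteq> M"
    "\<xi> \<in> convex hull K" "v \<bullet> \<xi> = c"
  shows "\<xi> \<in> M"
proof -
  define T where "T = convex hull K \<inter> {x. v \<bullet> x = c}"
  have sub: "convex hull K \<subseteq> {x. v \<bullet> x \<le> c}"
    by (rule hull_minimal) (use assms(3) convex_halfspace_le in auto)
  have "T face_of convex hull K" unfolding T_def
    by (rule face_of_Int_supporting_hyperplane_le) (use sub in auto)
  then obtain S' where S': "S' \<subseteq> K" "T = convex hull S'"
    using face_of_convex_hull_subset[OF assms(1)] by metis
  have "S' \<subseteq> T" using S'(2) hull_subset by metis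
  then have "S' \<subseteq> M" using S'(1) assms(4) unfolding T_def by auto
  then have "T \<subseteq> M" using S'(2) assms(2) by (simp add: hull_minimal)
  moreover have "\<xi> \<in> T" unfolding T_def using assms(5,6) by simp
  ultimately show ?thesis by blast
qed

context
  fixes S :: "('x::euclidean_space \<Rightarrow> 'x) set"
    and \<gamma> :: "'h::euclidean_space \<Rightarrow> 'x"
    and \<Lambda> :: "'a \<Rightarrow> 'x \<Rightarrow> 'h"
  assumes sds: "spectral_decomposition_system S \<gamma> \<Lambda>"
begin

lemma L_lin: "linear (\<Lambda> a)" and L_norm: "norm (\<Lambda> a x) = norm x"
  using sds unfolding spectral_decomposition_system_def by auto

lemma L_inner: "\<Lambda> a x \<bullet> \<Lambda> a y = x \<bullet> y"
proof -
  have e: "\<Lambda> a x + \<Lambda> a y = \<Lambda> a (x + y)" using L_lin linear_add by metis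
  have "norm (\<Lambda> a x + \<Lambda> a y) = norm (x + y)" by (simp only: e L_norm)
  then show ?thesis by (simp only: dot_norm[of "\<Lambda> a x" "\<Lambda> a y"] dot_norm[of x y] L_norm)
qed

lemma decomp: "\<exists>a. X = \<Lambda> a (\<gamma> X)"
  using sds unfolding spectral_decomposition_system_def by auto

lemma D: "X \<bullet> Y \<le> \<gamma> X \<bullet> \<gamma> Y"
  using sds unfolding spectral_decomposition_system_def by auto

lemma tau_ex: "\<exists>\<tau>. S_invariant S \<tau> \<and> (\<forall>x. \<tau> x \<in> orbit S x) \<and> (\<forall>a. \<gamma> \<circ> \<Lambda> a = \<tau>)"
  using sds unfolding spectral_decomposition_system_def by auto

lemma gL_indep: "\<gamma> (\<Lambda> a x) = \<gamma> (\<Lambda> b x)"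
proof -
  obtain \<tau> where "\<forall>a. \<gamma> \<circ> \<Lambda> a = \<tau>" using tau_ex by blast
  then have "\<gamma> (\<Lambda> a x) = \<tau> x" "\<gamma> (\<Lambda> b x) = \<tau> x" unfolding fun_eq_iff by auto
  then show ?thesis by simp
qed

lemma gL_orbit: "\<exists>s\<in>S. \<gamma> (\<Lambda> a x) = s x"
proof -
  obtain \<tau> where t: "\<forall>x. \<tau> x \<in> orbit S x" "\<forall>a. \<gamma> \<circ> \<Lambda> a = \<tau>" using tau_ex by blast
  then have "\<gamma> (\<Lambda> a x) = \<tau> x" unfolding fun_eq_iff by auto
  then show ?thesis using t(1) unfolding orbit_def by auto
qed

lemma gL_inv: "s \<in> S \<Longrightarrow> \<gamma> (\<Lambda> a (s x)) = \<gamma> (\<Lambda> a x)"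
proof -
  assume s: "s \<in> S"
  obtain \<tau> where t: "S_invariant S \<tau>" "\<forall>a. \<gamma> \<circ> \<Lambda> a = \<tau>" using tau_ex by blast
  then have "\<gamma> (\<Lambda> a y) = \<tau> y" for y unfolding fun_eq_iff by auto
  then show ?thesis using t(1) s unfolding S_invariant_def by auto
qed

lemma grp: "isometry_group S"
  using sds unfolding spectral_decomposition_system_def by auto

lemma S_lin: "s \<in> S \<Longrightarrow> linear s" and S_norm: "s \<in> S \<Longrightarrow> norm (s x) = norm x"
  using grp unfolding isometry_group_def by auto

lemma S_comp: "s \<in> S \<Longrightarrow> t \<in> S \<Longrightarrow> s \<circ> t \<in> S"
  using grp unfolding isometry_group_def by auto

lemma S_invE: "s \<in> S \<Longrightarrow> \<exists>t\<in>S. s \<circ> t = id \<and> t \<circ> s = id"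
  using grp unfolding isometry_group_def by auto

lemma S_inner: assumes "s \<in> S" shows "s x \<bullet> s y = x \<bullet> y"
proof -
  have e: "s x + s y = s (x + y)" using S_lin[OF assms] linear_add by metis
  have "norm (s x + s y) = norm (x + y)" by (simp only: e S_norm[OF assms])
  then show ?thesis by (simp only: dot_norm[of "s x" "s y"] dot_norm[of x y] S_norm[OF assms])
qed

lemma norm_gamma: "norm (\<gamma> X) = norm X"
proof -
  obtain a where "X = \<Lambda> a (\<gamma> X)" using decomp by blast
  then have "norm X = norm (\<Lambda> a (\<gamma> X))" by simp
  then show ?thesis by (simp add: L_norm)
qed

lemma gamma_sq: "\<gamma> X \<bullet> \<gamma> X = X \<bullet> X"
  by (simp add: dot_square_norm norm_gamma)

lemma gamma_fix: "\<gamma> (\<Lambda> a (\<gamma> X)) = \<gamma> X"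
proof -
  obtain b where "X = \<Lambda> b (\<gamma> X)" using decomp by blast
  then have "\<gamma> X = \<gamma> (\<Lambda> b (\<gamma> X))" by simp
  then show ?thesis using gL_indep[of a "\<gamma> X" b] by simp
qed

lemma norm_gL: "norm (\<gamma> (\<Lambda> a x)) = norm x"
  by (simp add: norm_gamma L_norm)

lemma gL_sq: "\<gamma> (\<Lambda> a x) \<bullet> \<gamma> (\<Lambda> a x) = x \<bullet> x"
  by (simp add: dot_square_norm norm_gL)

lemma inner_gL: "x \<bullet> y \<le> \<gamma> (\<Lambda> a x) \<bullet> \<gamma> (\<Lambda> a y)"
  using D[of "\<Lambda> a x" "\<Lambda> a y"] by (simp add: L_inner)

lemma gL_lip: "norm (\<gamma> (\<Lambda> a x) - \<gamma> (\<Lambda> a y)) \<le> norm (x - y)"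
proof -
  have "(norm (\<gamma> (\<Lambda> a x) - \<gamma> (\<Lambda> a y)))\<^sup>2 = (norm x)\<^sup>2 + (norm y)\<^sup>2 - 2 * (\<gamma> (\<Lambda> a x) \<bullet> \<gamma> (\<Lambda> a y))"
    by (simp add: gL_sq power2_norm_eq_inner inner_diff algebra_simps inner_commute)
  also have "\<dots> \<le> (norm x)\<^sup>2 + (norm y)\<^sup>2 - 2 * (x \<bullet> y)" using inner_gL[of x y a] by simp
  also have "\<dots> = (norm (x - y))\<^sup>2"
    by (simp add: power2_norm_eq_inner inner_diff algebra_simps inner_commute)
  finally show ?thesis using power2_le_imp_le by fastforce
qed

lemma sim:
  assumes eq: "X \<bullet> Y = \<gamma> X \<bullet> \<gamma> Y"
  shows "\<exists>a. X = \<Lambda> a (\<gamma> X) \<and> Y = \<Lambda> a (\<gamma> Y)"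
proof -
  define Z where "Z = X + Y"
  obtain a where a: "Z = \<Lambda> a (\<gamma> Z)" using decomp by blast
  define W where "W = \<gamma> X + \<gamma> Y"
  have nW: "(norm W)\<^sup>2 = (norm Z)\<^sup>2"
    unfolding W_def Z_def using eq
    by (simp add: gamma_sq power2_norm_eq_inner inner_add algebra_simps inner_commute)
  have "(norm Z)\<^sup>2 = Z \<bullet> X + Z \<bullet> Y" unfolding Z_def
    by (simp add: power2_norm_eq_inner inner_add)
  also have "\<dots> \<le> \<gamma> Z \<bullet> \<gamma> X + \<gamma> Z \<bullet> \<gamma> Y" using D[of Z X] D[of Z Y] by simp
  also have "\<dots> = \<gamma> Z \<bullet> W" unfolding W_def by (simp add: inner_add)
  finally have le: "(norm Z)\<^sup>2 \<le> \<gamma> Z \<bullet> W" .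
  have "\<gamma> Z \<bullet> W \<le> norm (\<gamma> Z) * norm W" by (rule norm_cauchy_schwarz)
  have nZ: "norm (\<gamma> Z) = norm Z" by (rule norm_gamma)
  have nW': "norm W = norm Z" using nW by (simp add: power2_eq_iff_nonneg)
  have "(norm (\<gamma> Z - W))\<^sup>2 = (norm (\<gamma> Z))\<^sup>2 + (norm W)\<^sup>2 - 2 * (\<gamma> Z \<bullet> W)"
    by (simp add: power2_norm_eq_inner inner_diff algebra_simps inner_commute)
  also have "\<dots> \<le> 0" using le nZ nW' by simp
  finally have "\<gamma> Z = W" by simp
  then have ZUV: "X + Y = \<Lambda> a (\<gamma> X) + \<Lambda> a (\<gamma> Y)"
    using a linear_add[OF L_lin] unfolding W_def Z_def by simp
  define U where "U = \<Lambda> a (\<gamma> X)"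
  define V where "V = \<Lambda> a (\<gamma> Y)"
  have "\<gamma> V = \<gamma> Y" unfolding V_def by (rule gamma_fix)
  then have XV: "X \<bullet> V \<le> X \<bullet> Y" using D[of X V] eq by simp
  have VV: "V = X + Y - U" using ZUV unfolding U_def V_def by simp
  have nU: "norm U = norm X" unfolding U_def by (simp add: L_norm norm_gamma)
  have "X \<bullet> X \<le> X \<bullet> U" using XV unfolding VV by (simp add: inner_diff inner_add)
  have "(norm (X - U))\<^sup>2 = X \<bullet> X + U \<bullet> U - 2 * (X \<bullet> U)"
    by (simp add: power2_norm_eq_inner inner_diff algebra_simps inner_commute)
  also have "\<dots> \<le> 0" using \<open>X \<bullet> X \<le> X \<bullet> U\<close> nU by (simp add: dot_square_norm)
  finally have "X = U" by simp
  then have "Y = V" using VV by simp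
  then show ?thesis using \<open>X = U\<close> U_def V_def by blast
qed

lemma sigma_bound: "X \<bullet> \<Lambda> a (\<gamma> Y) \<le> \<gamma> X \<bullet> \<gamma> Y"
  using D[of X "\<Lambda> a (\<gamma> Y)"] by (simp add: gamma_fix)

lemma sigma_convex:
  assumes "X1 \<bullet> Y = \<gamma> X1 \<bullet> \<gamma> Y" "X2 \<bullet> Y = \<gamma> X2 \<bullet> \<gamma> Y"
    and that: "0 \<le> t" "t \<le> 1"
  shows "((1 - t) *\<^sub>R X1 + t *\<^sub>R X2) \<bullet> Y = \<gamma> ((1 - t) *\<^sub>R X1 + t *\<^sub>R X2) \<bullet> \<gamma> Y"
proof -
  define Xt where "Xt = (1 - t) *\<^sub>R X1 + t *\<^sub>R X2"
  obtain a where a: "Xt = \<Lambda> a (\<gamma> Xt)" using decomp by blast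
  have "\<gamma> Xt \<bullet> \<gamma> Y = Xt \<bullet> \<Lambda> a (\<gamma> Y)" using L_inner[of a "\<gamma> Xt" "\<gamma> Y"] a by simp
  also have "\<dots> = (1 - t) * (X1 \<bullet> \<Lambda> a (\<gamma> Y)) + t * (X2 \<bullet> \<Lambda> a (\<gamma> Y))"
    unfolding Xt_def by (simp add: inner_add)
  also have "\<dots> \<le> (1 - t) * (\<gamma> X1 \<bullet> \<gamma> Y) + t * (\<gamma> X2 \<bullet> \<gamma> Y)"
    using sigma_bound[of X1 a Y] sigma_bound[of X2 a Y] that
    by (intro add_mono mult_left_mono) auto
  also have "\<dots> = Xt \<bullet> Y" unfolding Xt_def using assms by (simp add: inner_add)
  finally show ?thesis using D[of Xt Y] unfolding Xt_def by linarith
qed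

lemma orbit_eq: "orbit S x = {y. \<gamma> (\<Lambda> a y) = \<gamma> (\<Lambda> a x)}"
proof (intro set_eqI iffI)
  fix y assume "y \<in> orbit S x"
  then obtain s where "s \<in> S" "y = s x" unfolding orbit_def by blast
  then show "y \<in> {y. \<gamma> (\<Lambda> a y) = \<gamma> (\<Lambda> a x)}" using gL_inv by simp
next
  fix y assume "y \<in> {y. \<gamma> (\<Lambda> a y) = \<gamma> (\<Lambda> a x)}"
  then have e: "\<gamma> (\<Lambda> a y) = \<gamma> (\<Lambda> a x)" by simp
  obtain s where s: "s \<in> S" "\<gamma> (\<Lambda> a y) = s y" using gL_orbit by blast
  obtain s' where s': "s' \<in> S" "\<gamma> (\<Lambda> a x) = s' x" using gL_orbit by blast
  obtain t where t: "t \<in> S" "s \<circ> t = id" "t \<circ> s = id" using S_invE[OF s(1)] by blast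
  have "y = t (s y)" using t(3) by (simp add: fun_eq_iff)
  also have "\<dots> = (t \<circ> s') x" using e s s' by simp
  finally show "y \<in> orbit S x" unfolding orbit_def using S_comp[OF t(1) s'(1)] by blast
qed

lemma orbit_compact: "compact (orbit S x)"
proof -
  fix a
  have cont: "continuous_on UNIV (\<lambda>y. \<gamma> (\<Lambda> a y))"
    by (rule lipschitz_on_continuous_on[where L=1], rule lipschitz_onI)
       (auto simp: dist_norm gL_lip)
  have "closed ((\<lambda>y. \<gamma> (\<Lambda> a y)) -` {\<gamma> (\<Lambda> a x)})"
    by (rule continuous_closed_vimage) (use cont continuous_on_eq_continuous_at in auto)
  moreover have "(\<lambda>y. \<gamma> (\<Lambda> a y)) -` {\<gamma> (\<Lambda> a x)} = orbit S x"
    using orbit_eq[of x a] by auto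
  moreover have "bounded (orbit S x)"
    unfolding bounded_iff orbit_def using S_norm by auto
  ultimately show ?thesis using compact_eq_bounded_closed by auto
qed


lemma adj_left: "adjoint (\<Lambda> a) (\<Lambda> a x) = x"
proof -
  define d where "d = adjoint (\<Lambda> a) (\<Lambda> a x) - x"
  have "d \<bullet> adjoint (\<Lambda> a) (\<Lambda> a x) = d \<bullet> x"
    using adjoint_works[OF L_lin, of d a "\<Lambda> a x"] by (simp add: L_inner)
  then have "d \<bullet> d = 0" unfolding d_def by (simp add: inner_diff_right)
  then show ?thesis unfolding d_def by simp
qed

lemma adj_hull: "adjoint (\<Lambda> a) X \<in> convex hull (orbit S (\<gamma> X))"
proof (rule ccontr)
  define K where "K = convex hull (orbit S (\<gamma> X))"
  define \<xi> where "\<xi> = adjoint (\<Lambda> a) X"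
  assume "\<not> ?thesis"
  then have nK: "\<xi> \<notin> K" unfolding K_def \<xi>_def .
  have cK: "compact K" unfolding K_def by (rule compact_convex_hull[OF orbit_compact])
  obtain w c where wc: "w \<bullet> \<xi> < c" "\<forall>x\<in>K. c < w \<bullet> x"
    using separating_hyperplane_closed_point[OF _ _ nK] cK compact_imp_closed
      convex_convex_hull unfolding K_def by blast
  define v where "v = - w"
  have "v \<bullet> \<xi> = \<Lambda> a v \<bullet> X" unfolding \<xi>_def by (rule adjoint_works[OF L_lin])
  also have "\<dots> \<le> \<gamma> (\<Lambda> a v) \<bullet> \<gamma> X" by (rule D)
  finally have le1: "v \<bullet> \<xi> \<le> \<gamma> (\<Lambda> a v) \<bullet> \<gamma> X" .
  obtain s where s: "s \<in> S" "\<gamma> (\<Lambda> a v) = s v" using gL_orbit by blast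
  obtain t where t: "t \<in> S" "s \<circ> t = id" "t \<circ> s = id" using S_invE[OF s(1)] by blast
  have "\<gamma> X = s (t (\<gamma> X))" using t(2) by (simp add: fun_eq_iff)
  then have "\<gamma> (\<Lambda> a v) \<bullet> \<gamma> X = s v \<bullet> s (t (\<gamma> X))" using s by simp
  also have "\<dots> = v \<bullet> t (\<gamma> X)" by (rule S_inner[OF s(1)])
  finally have le2: "v \<bullet> \<xi> \<le> v \<bullet> t (\<gamma> X)" using le1 by simp
  have "t (\<gamma> X) \<in> K" unfolding K_def orbit_def using t(1) by (blast intro: hull_inc)
  then have "c < w \<bullet> t (\<gamma> X)" using wc by blast
  then show False using le2 wc(1) unfolding v_def by simp
qed


lemma ereal_minus_le: "(a::real) \<le> b \<Longrightarrow> e - ereal b \<le> e - ereal a"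
  by (cases e) auto

lemma main:
  fixes \<phi> :: "'x \<Rightarrow> ereal" and Y :: 'h
  assumes prp: "proper \<phi>"
    and inv: "S_invariant S \<phi>"
  defines "\<M> \<equiv> Argmin (\<lambda>X. \<phi> (\<gamma> X) - ereal (X \<bullet> Y))"
    and "M \<equiv> Argmin (\<lambda>x. \<phi> x - ereal (x \<bullet> \<gamma> Y))"
  shows "(INF X. \<phi> (\<gamma> X) - ereal (X \<bullet> Y)) = (INF x. \<phi> x - ereal (x \<bullet> \<gamma> Y))
    \<and> (\<forall>X. X \<in> \<M> \<longleftrightarrow> (\<gamma> X \<in> M \<and> (\<exists>a. X = \<Lambda> a (\<gamma> X) \<and> Y = \<Lambda> a (\<gamma> Y))))
    \<and> (\<forall>x. \<forall>b \<in> A_of \<gamma> \<Lambda> Y. \<Lambda> b x \<in> \<M> \<longleftrightarrow> x \<in> M)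
    \<and> \<M> = {\<Lambda> b x | x b. x \<in> M \<and> b \<in> A_of \<gamma> \<Lambda> Y}
    \<and> (convex \<M> \<longleftrightarrow> convex M)
    \<and> ((\<exists>Z. \<M> = {Z}) \<longleftrightarrow> (\<exists>z. M = {z}))"
proof -
  define F where "F = (\<lambda>X. \<phi> (\<gamma> X) - ereal (X \<bullet> Y))"
  define G where "G = (\<lambda>x. \<phi> x - ereal (x \<bullet> \<gamma> Y))"
  have MF: "\<M> = Argmin F" unfolding \<M>_def F_def by simp
  have MG: "M = Argmin G" unfolding M_def G_def by simp
  have Aiff: "b \<in> A_of \<gamma> \<Lambda> Y \<longleftrightarrow> Y = \<Lambda> b (\<gamma> Y)" for b unfolding A_of_def by simp
  obtain b0 where b0: "Y = \<Lambda> b0 (\<gamma> Y)" using decomp by blast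
  have phinf: "\<phi> x \<noteq> -\<infinity>" for x using prp unfolding proper_def by auto
  have phi_s: "s \<in> S \<Longrightarrow> \<phi> (s x) = \<phi> x" for s x using inv unfolding S_invariant_def by auto
  have phi_gL: "\<phi> (\<gamma> (\<Lambda> a x)) = \<phi> x" for a x
    using gL_orbit[of a x] phi_s by auto
  have FG: "F (\<Lambda> b x) = G x" if "Y = \<Lambda> b (\<gamma> Y)" for b x
  proof -
    have "\<Lambda> b x \<bullet> Y = x \<bullet> \<gamma> Y" using that L_inner[of b x "\<gamma> Y"] by simp
    then show ?thesis unfolding F_def G_def using phi_gL by simp
  qed
  have GF: "G (\<gamma> X) \<le> F X" for X
    unfolding F_def G_def by (rule ereal_minus_le[OF D])
  define m where "m = (INF X. F X)"
  have inf: "m = (INF x. G x)"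
    unfolding m_def
  proof (rule antisym)
    show "(INF X. F X) \<le> (INF x. G x)"
    proof (rule INF_greatest)
      fix x
      have "(INF X. F X) \<le> F (\<Lambda> b0 x)" by (rule INF_lower) simp
      then show "(INF X. F X) \<le> G x" using FG[OF b0] by simp
    qed
    show "(INF x. G x) \<le> (INF X. F X)"
    proof (rule INF_greatest)
      fix X
      have "(INF x. G x) \<le> G (\<gamma> X)" by (rule INF_lower) simp
      then show "(INF x. G x) \<le> F X" using GF[of X] by (rule order_trans)
    qed
  qed
  have Fm: "m \<le> F X" for X unfolding m_def by (simp add: INF_lower)
  have Gm: "m \<le> G x" for x unfolding inf by (simp add: INF_lower)
  have Miff: "X \<in> \<M> \<longleftrightarrow> m < \<infinity> \<and> F X = m" for X
    unfolding MF Argmin_def m_def by auto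
  have Miff2: "x \<in> M \<longleftrightarrow> m < \<infinity> \<and> G x = m" for x
    unfolding MG Argmin_def inf by auto
  have iii: "\<Lambda> b x \<in> \<M> \<longleftrightarrow> x \<in> M" if "Y = \<Lambda> b (\<gamma> Y)" for b x
    using Miff Miff2 FG[OF that] by simp
  have ii1: "\<gamma> X \<in> M \<and> X \<bullet> Y = \<gamma> X \<bullet> \<gamma> Y" if "X \<in> \<M>" for X
  proof -
    have mF: "m < \<infinity>" "F X = m" using that Miff by auto
    have "G (\<gamma> X) = m" using GF[of X] Gm[of "\<gamma> X"] mF by simp
    then have g: "\<gamma> X \<in> M" using Miff2 mF by simp
    obtain r where r: "\<phi> (\<gamma> X) = ereal r"
      using mF phinf[of "\<gamma> X"] unfolding F_def by (cases "\<phi> (\<gamma> X)") auto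
    have "F X = G (\<gamma> X)" using \<open>G (\<gamma> X) = m\<close> mF by simp
    then have "X \<bullet> Y = \<gamma> X \<bullet> \<gamma> Y" unfolding F_def G_def r by simp
    then show ?thesis using g by simp
  qed
  have ii: "X \<in> \<M> \<longleftrightarrow> (\<gamma> X \<in> M \<and> (\<exists>a. X = \<Lambda> a (\<gamma> X) \<and> Y = \<Lambda> a (\<gamma> Y)))" for X
  proof
    assume "X \<in> \<M>"
    then show "\<gamma> X \<in> M \<and> (\<exists>a. X = \<Lambda> a (\<gamma> X) \<and> Y = \<Lambda> a (\<gamma> Y))"
      using ii1[OF \<open>X \<in> \<M>\<close>] sim[of X Y] by simp
  next
    assume "\<gamma> X \<in> M \<and> (\<exists>a. X = \<Lambda> a (\<gamma> X) \<and> Y = \<Lambda> a (\<gamma> Y))"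
    then obtain a where "\<gamma> X \<in> M" "X = \<Lambda> a (\<gamma> X)" "Y = \<Lambda> a (\<gamma> Y)" by blast
    then show "X \<in> \<M>" using iii[of a "\<gamma> X"] by simp
  qed
  have iv: "\<M> = {\<Lambda> b x | x b. x \<in> M \<and> b \<in> A_of \<gamma> \<Lambda> Y}"
  proof (intro set_eqI iffI)
    fix X assume "X \<in> \<M>"
    then obtain a where "\<gamma> X \<in> M" "X = \<Lambda> a (\<gamma> X)" "Y = \<Lambda> a (\<gamma> Y)" using ii by blast
    then show "X \<in> {\<Lambda> b x | x b. x \<in> M \<and> b \<in> A_of \<gamma> \<Lambda> Y}" using Aiff by blast
  next
    fix X assume "X \<in> {\<Lambda> b x | x b. x \<in> M \<and> b \<in> A_of \<gamma> \<Lambda> Y}"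
    then obtain x b where "X = \<Lambda> b x" "x \<in> M" "b \<in> A_of \<gamma> \<Lambda> Y" by blast
    then show "X \<in> \<M>" using Aiff iii by simp
  qed
  have Mvim: "M = \<Lambda> b0 -` \<M>" using iii[OF b0] by auto
  have conv1: "convex M" if "convex \<M>"
    unfolding Mvim by (rule convex_linear_vimage[OF L_lin that])
  have conv2: "convex \<M>" if cM: "convex M"
    unfolding convex_alt
  proof (intro ballI allI impI)
    fix X1 X2 and t :: real
    assume X1: "X1 \<in> \<M>" and X2: "X2 \<in> \<M>" and t: "0 \<le> t \<and> t \<le> 1"
    define Xt where "Xt = (1 - t) *\<^sub>R X1 + t *\<^sub>R X2"
    have e1: "\<gamma> X1 \<in> M" "X1 \<bullet> Y = \<gamma> X1 \<bullet> \<gamma> Y" using ii1[OF X1] by auto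
    have e2: "\<gamma> X2 \<in> M" "X2 \<bullet> Y = \<gamma> X2 \<bullet> \<gamma> Y" using ii1[OF X2] by auto
    have et: "Xt \<bullet> Y = \<gamma> Xt \<bullet> \<gamma> Y" unfolding Xt_def
      using sigma_convex[OF e1(2) e2(2)] t by auto
    obtain c where c: "Xt = \<Lambda> c (\<gamma> Xt)" "Y = \<Lambda> c (\<gamma> Y)" using sim[OF et] by blast
    have mfin: "m < \<infinity>" using X1 Miff by auto
    have xiM: "adjoint (\<Lambda> c) X \<in> M" if XM: "X \<in> \<M>" for X
    proof -
      have eX: "\<gamma> X \<in> M" "X \<bullet> Y = \<gamma> X \<bullet> \<gamma> Y" using ii1[OF XM] by auto
      show ?thesis
      proof (rule face_lemma[where K = "orbit S (\<gamma> X)" and v = "\<gamma> Y" and c = "\<gamma> X \<bullet> \<gamma> Y"])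
        show "compact (orbit S (\<gamma> X))" by (rule orbit_compact)
        show "convex M" by (rule cM)
        show "\<forall>k\<in>orbit S (\<gamma> X). \<gamma> Y \<bullet> k \<le> \<gamma> X \<bullet> \<gamma> Y"
        proof
          fix k assume "k \<in> orbit S (\<gamma> X)"
          then obtain s where s: "s \<in> S" "k = s (\<gamma> X)" unfolding orbit_def by blast
          have "\<gamma> Y \<bullet> k = \<Lambda> b0 k \<bullet> Y" using L_inner[of b0 k "\<gamma> Y"] b0 by (simp add: inner_commute)
          also have "\<dots> \<le> \<gamma> (\<Lambda> b0 k) \<bullet> \<gamma> Y" by (rule D)
          also have "\<gamma> (\<Lambda> b0 k) = \<gamma> X" using s gL_inv gamma_fix by simp
          finally show "\<gamma> Y \<bullet> k \<le> \<gamma> X \<bullet> \<gamma> Y" .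
        qed
        show "{k \<in> orbit S (\<gamma> X). \<gamma> Y \<bullet> k = \<gamma> X \<bullet> \<gamma> Y} \<subseteq> M"
        proof
          fix k assume k: "k \<in> {k \<in> orbit S (\<gamma> X). \<gamma> Y \<bullet> k = \<gamma> X \<bullet> \<gamma> Y}"
          then obtain s where s: "s \<in> S" "k = s (\<gamma> X)" unfolding orbit_def by blast
          have "G k = G (\<gamma> X)" unfolding G_def using k s phi_s by (simp add: inner_commute)
          then show "k \<in> M" using eX(1) Miff2 by simp
        qed
        show "adjoint (\<Lambda> c) X \<in> convex hull orbit S (\<gamma> X)" by (rule adj_hull)
        have "\<gamma> Y \<bullet> adjoint (\<Lambda> c) X = \<Lambda> c (\<gamma> Y) \<bullet> X" by (rule adjoint_works[OF L_lin])
        then show "\<gamma> Y \<bullet> adjoint (\<Lambda> c) X = \<gamma> X \<bullet> \<gamma> Y" using c(2) eX(2) by (simp add: inner_commute)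
      qed
    qed
    have lin: "linear (adjoint (\<Lambda> c))" by (rule adjoint_linear[OF L_lin])
    have "\<gamma> Xt = adjoint (\<Lambda> c) Xt" using adj_left[of c "\<gamma> Xt"] c(1) by simp
    also have "\<dots> = (1 - t) *\<^sub>R adjoint (\<Lambda> c) X1 + t *\<^sub>R adjoint (\<Lambda> c) X2"
      unfolding Xt_def using lin by (simp add: linear_add linear_scale)
    finally have "\<gamma> Xt \<in> M" using cM xiM[OF X1] xiM[OF X2] t unfolding convex_alt by simp
    then have "G (\<gamma> Xt) = m" using Miff2 by simp
    moreover have "F Xt = G (\<gamma> Xt)" unfolding F_def G_def using et by simp
    ultimately show "(1 - t) *\<^sub>R X1 + t *\<^sub>R X2 \<in> \<M>" using Miff mfin unfolding Xt_def by simp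
  qed
  have vi: "(\<exists>Z. \<M> = {Z}) \<longleftrightarrow> (\<exists>z. M = {z})"
  proof
    assume "\<exists>Z. \<M> = {Z}"
    then obtain Z where Z: "\<M> = {Z}" by blast
    have gZ: "\<gamma> Z \<in> M" using ii1[of Z] Z by simp
    have "M = {\<gamma> Z}"
    proof (intro set_eqI iffI)
      fix x assume "x \<in> M"
      then have "\<Lambda> b0 x = Z" using Mvim Z by auto
      moreover have "\<Lambda> b0 (\<gamma> Z) = Z" using gZ Mvim Z by auto
      ultimately have "\<Lambda> b0 x = \<Lambda> b0 (\<gamma> Z)" by simp
      then have "adjoint (\<Lambda> b0) (\<Lambda> b0 x) = adjoint (\<Lambda> b0) (\<Lambda> b0 (\<gamma> Z))" by simp
      then show "x \<in> {\<gamma> Z}" by (simp add: adj_left)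
    qed (use gZ in simp)
    then show "\<exists>z. M = {z}" by blast
  next
    assume "\<exists>z. M = {z}"
    then obtain z where z: "M = {z}" by blast
    define Z where "Z = \<Lambda> b0 z"
    have ZM: "Z \<in> \<M>" unfolding Z_def using iii[OF b0] z by simp
    have cvx: "convex \<M>" using conv2 z by simp
    have "X = Z" if XM: "X \<in> \<M>" for X
    proof -
      define P where "P = (1/2) *\<^sub>R X + (1/2) *\<^sub>R Z"
      have "P \<in> \<M>" unfolding P_def using convexD[OF cvx XM ZM, of "1/2" "1/2"] by simp
      then have "\<gamma> P = z" using ii1[of P] z by simp
      then have nP: "P \<bullet> P = z \<bullet> z" using gamma_sq[of P] by simp
      have "\<gamma> X = z" using ii1[OF XM] z by simp
      then have nX: "X \<bullet> X = z \<bullet> z" using gamma_sq[of X] by simp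
      have nZ: "Z \<bullet> Z = z \<bullet> z" unfolding Z_def by (simp add: L_inner)
      have "P \<bullet> P = (X \<bullet> X + 2 * (X \<bullet> Z) + Z \<bullet> Z) / 4" unfolding P_def
        by (simp add: inner_add inner_commute field_simps)
      then have "X \<bullet> Z = z \<bullet> z" using nP nX nZ by simp
      then have "(X - Z) \<bullet> (X - Z) = 0" using nX nZ by (simp add: inner_diff inner_commute)
      then show ?thesis by simp
    qed
    then have "\<M> = {Z}" using ZM by blast
    then show "\<exists>Z. \<M> = {Z}" by blast
  qed
  have i: "(INF X. \<phi> (\<gamma> X) - ereal (X \<bullet> Y)) = (INF x. \<phi> x - ereal (x \<bullet> \<gamma> Y))"
    using inf unfolding m_def F_def G_def by simp
  have iii': "\<forall>x. \<forall>b \<in> A_of \<gamma> \<Lambda> Y. \<Lambda> b x \<in> \<M> \<longleftrightarrow> x \<in> M"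
    using iii Aiff by blast
  show ?thesis
  proof (intro conjI)
    show "convex \<M> = convex M" using conv1 conv2 by blast
  qed (use i ii iii' iv vi in auto)
qed

end

theorem theorem5p1:
  fixes S :: "('x::euclidean_space \<Rightarrow> 'x) set"
    and \<gamma> :: "'h::euclidean_space \<Rightarrow> 'x"
    and \<Lambda> :: "'a \<Rightarrow> 'x \<Rightarrow> 'h"
    and \<phi> :: "'x \<Rightarrow> ereal"
    and Y :: 'h
  assumes sds: "spectral_decomposition_system S \<gamma> \<Lambda>"
    and prp: "proper \<phi>"
    and inv: "S_invariant S \<phi>"
  defines "\<M> \<equiv> Argmin (\<lambda>X. \<phi> (\<gamma> X) - ereal (X \<bullet> Y))"
    and "M \<equiv> Argmin (\<lambda>x. \<phi> x - ereal (x \<bullet> \<gamma> Y))"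
  shows "(INF X. \<phi> (\<gamma> X) - ereal (X \<bullet> Y)) = (INF x. \<phi> x - ereal (x \<bullet> \<gamma> Y))
    \<and> (\<forall>X. X \<in> \<M> \<longleftrightarrow> (\<gamma> X \<in> M \<and> (\<exists>a. X = \<Lambda> a (\<gamma> X) \<and> Y = \<Lambda> a (\<gamma> Y))))
    \<and> (\<forall>x. \<forall>b \<in> A_of \<gamma> \<Lambda> Y. \<Lambda> b x \<in> \<M> \<longleftrightarrow> x \<in> M)
    \<and> \<M> = {\<Lambda> b x | x b. x \<in> M \<and> b \<in> A_of \<gamma> \<Lambda> Y}
    \<and> (convex \<M> \<longleftrightarrow> convex M)
    \<and> ((\<exists>Z. \<M> = {Z}) \<longleftrightarrow> (\<exists>z. M = {z}))"
  unfolding \<M>_def M_def by (rule main[OF sds prp inv])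

end
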